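(* Let $(F_\epsilon)_{\epsilon>0}$ be a perturbation of a cellular automaton such that $\mathcal{M}_{\lim}$ is uniformly approached. Then $\liminf_{\epsilon\to0}\mathrm{diam}(\mathcal{M}_\epsilon)=0$, that is, for all $\delta>0$ and all $\epsilon_0>0$ there exists $\epsilon<\epsilon_0$ with $\mathrm{diam}(\mathcal{M}_\epsilon)<\delta$.
   Context: $\mathcal{A}$ finite; $\mathcal{M}(\mathcal{A}^{\mathbb{Z}})$ is the set of shift-invariant Borel probability measures with the weak topology, metrized by $d_{\mathcal{M}}(\mu,\nu)=\sum_{n\ge0}2^{-n}\frac12\sum_{u\in\mathcal{A}^{[-n,n]}}|\mu([u])-\nu([u])|$. For a compact set $\mathcal{K}$, $\mathrm{diam}(\mathcal{K})=\max\{d_{\mathcal{M}}(\mu,\nu):\mu,\nu\in\mathcal{K}\}$. A perturbation of a CA $F$ (neighborhood $\mathcal{N}$, local rule $f$) is a family $(F_\epsilon)_{\epsilon>0}$ of probabilistic cellular automata with neighborhood $\mathcal{N}$ and local stochastic matrices $f_\epsilon$ with $f_\epsilon(u,f(u))\ge1-\epsilon$, acting on measures via $F_\epsilon(x,[w]_U)=\prod_{i\in U}f_\epsilon(x_{i+\mathcal{N}},w_i)$. $\mathcal{M}_\epsilon$ is the set of $\mu\in\mathcal{M}(\mathcal{A}^{\mathbb{Z}})$ with $F_\epsilon\mu=\mu$; $\mathcal{M}_{\lim}$ is the set of limits of sequences $\mu_n\in\mathcal{M}_{\epsilon_n}$ with $\epsilon_n\to0$, $\epsilon_n>0$. $\mathcal{M}_{\lim}$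 is uniformly approached if for every family $(\pi_\epsilon)_{\epsilon>0}$ with $\pi_\epsilon\in\mathcal{M}_\epsilon$, the set of accumulation points of $\pi_\epsilon$ as $\epsilon\to0$ equals $\mathcal{M}_{\lim}$. *)

theory Defs
  imports "HOL-Probability.Probability"
begin

definition conf_space :: "(int \<Rightarrow> 'a) measure" where
  "conf_space = (\<Pi>\<^sub>M i\<in>(UNIV::int set). count_space (UNIV::'a set))"

definition shift :: "(int \<Rightarrow> 'a) \<Rightarrow> (int \<Rightarrow> 'a)" where
  "shift x = (\<lambda>i. x (i + 1))"

definition Minv :: "(int \<Rightarrow> 'a::finite) measure set" where
  "Minv = {\<mu>. sets \<mu> = sets conf_space \<and> prob_space \<mu> \<and> distr \<mu> \<mu> shift = \<mu>}"

definition cyl :: "int set \<Rightarrow> (int \<Rightarrow> 'a) \<Rightarrow> (int \<Rightarrow> 'a) set" where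
  "cyl U w = {x. \<forall>i\<in>U. x i = w i}"

definition dM :: "(int \<Rightarrow> 'a::finite) measure \<Rightarrow> (int \<Rightarrow> 'a) measure \<Rightarrow> real" where
  "dM \<mu> \<nu> = (\<Sum>n::nat. (1/2)^n * (1/2) *
      (\<Sum>u\<in>(PiE {-int n..int n} (\<lambda>_. (UNIV::'a set))).
          \<bar>measure \<mu> (cyl {-int n..int n} u) - measure \<nu> (cyl {-int n..int n} u)\<bar>))"

definition diamM :: "(int \<Rightarrow> 'a::finite) measure set \<Rightarrow> real" where
  "diamM K = Sup {dM \<mu> \<nu> | \<mu> \<nu>. \<mu> \<in> K \<and> \<nu> \<in> K}"

definition localpat :: "int set \<Rightarrow> (int \<Rightarrow> 'a) \<Rightarrow> int \<Rightarrow> (int \<Rightarrow> 'a)" where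
  "localpat N x i = restrict (\<lambda>j. x (i + j)) N"

definition is_perturbation ::
  "int set \<Rightarrow> ((int \<Rightarrow> 'a::finite) \<Rightarrow> 'a) \<Rightarrow> (real \<Rightarrow> (int \<Rightarrow> 'a) \<Rightarrow> 'a \<Rightarrow> real) \<Rightarrow> bool" where
  "is_perturbation N f fe \<longleftrightarrow> finite N \<and>
     (\<forall>e>0. \<forall>u\<in>PiE N (\<lambda>_. UNIV).
        (\<forall>b. fe e u b \<ge> 0) \<and> (\<Sum>b\<in>UNIV. fe e u b) = 1 \<and> fe e u (f u) \<ge> 1 - e)"

definition PCA_kernel ::
  "int set \<Rightarrow> ((int \<Rightarrow> 'a) \<Rightarrow> 'a \<Rightarrow> real) \<Rightarrow> (int \<Rightarrow> 'a) \<Rightarrow> int set \<Rightarrow> (int \<Rightarrow> 'a) \<Rightarrow> real" where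
  "PCA_kernel N g x U w = (\<Prod>i\<in>U. g (localpat N x i) (w i))"

text \<open>F_eps mu = mu, i.e. (F_eps mu)([w]_U) = integral of F_eps(x,[w]_U) d mu(x) equals
  mu([w]_U) for every finite U and every w (cylinders determine the measure).\<close>
definition Meps :: "int set \<Rightarrow> (real \<Rightarrow> (int \<Rightarrow> 'a::finite) \<Rightarrow> 'a \<Rightarrow> real) \<Rightarrow> real \<Rightarrow>
     (int \<Rightarrow> 'a) measure set" where
  "Meps N fe e = {\<mu> \<in> Minv. \<forall>U w. finite U \<longrightarrow>
      (\<integral>x. PCA_kernel N (fe e) x U w \<partial>\<mu>) = measure \<mu> (cyl U w)}"

definition Mlim :: "int set \<Rightarrow> (real \<Rightarrow> (int \<Rightarrow> 'a::finite) \<Rightarrow> 'a \<Rightarrow> real) \<Rightarrow>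
     (int \<Rightarrow> 'a) measure set" where
  "Mlim N fe = {\<mu> \<in> Minv. \<exists>en :: nat \<Rightarrow> real. \<exists>\<mu>n.
      (\<forall>n. en n > 0) \<and> en \<longlonglongrightarrow> 0 \<and> (\<forall>n. \<mu>n n \<in> Meps N fe (en n)) \<and>
      (\<lambda>n. dM (\<mu>n n) \<mu>) \<longlonglongrightarrow> 0}"

definition acc_points :: "(real \<Rightarrow> (int \<Rightarrow> 'a::finite) measure) \<Rightarrow> (int \<Rightarrow> 'a) measure set" where
  "acc_points \<pi> = {\<mu> \<in> Minv. \<forall>r>0. \<exists>\<^sub>F e in at_right 0. dM (\<pi> e) \<mu> < r}"

definition uniformly_approached :: "int set \<Rightarrow> (real \<Rightarrow> (int \<Rightarrow> 'a::finite) \<Rightarrow> 'a \<Rightarrow> real) \<Rightarrow> bool" where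
  "uniformly_approached N fe \<longleftrightarrow>
     (\<forall>\<pi>. (\<forall>e>0. \<pi> e \<in> Meps N fe e) \<longrightarrow> acc_points \<pi> = Mlim N fe)"

end

theory Submission
  imports Defs "HOL-Library.Diagonal_Subsequence"
begin

abbreviation pats :: "int set \<Rightarrow> (int \<Rightarrow> 'a) set" where
  "pats J \<equiv> PiE J (\<lambda>_. UNIV)"

definition pm :: "(int \<Rightarrow> 'a) measure \<Rightarrow> bool" where
  "pm \<mu> \<longleftrightarrow> sets \<mu> = sets conf_space \<and> prob_space \<mu>"

lemma space_conf[simp]: "space (conf_space :: (int \<Rightarrow> 'a) measure) = UNIV"
  by (simp add: conf_space_def space_PiM PiE_UNIV_domain)

lemma pm_space: "pm \<mu> \<Longrightarrow> space \<mu> = UNIV"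
  unfolding pm_def by (metis sets_eq_imp_space_eq space_conf)

lemma cyl_sets_conf: "finite J \<Longrightarrow> cyl J w \<in> sets conf_space"
proof -
  assume "finite J"
  have "cyl J w = prod_emb UNIV (\<lambda>_. count_space UNIV) J (PiE J (\<lambda>j. {w j}))"
    by (auto simp: cyl_def prod_emb_def PiE_iff restrict_def)
  moreover have "\<dots> \<in> sets conf_space" unfolding conf_space_def
    using \<open>finite J\<close> by (intro sets_PiM_I) auto
  ultimately show ?thesis by simp
qed

lemma cyl_sets: "pm \<mu> \<Longrightarrow> finite J \<Longrightarrow> cyl J w \<in> sets \<mu>"
  using cyl_sets_conf unfolding pm_def by auto

lemma finite_pats: "finite J \<Longrightarrow> finite (pats J :: (int \<Rightarrow> 'a::finite) set)"
  by (intro finite_PiE) auto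

lemma cyl_restrict: "cyl J (restrict w J) = cyl J w"
  by (auto simp: cyl_def)

lemma in_cyl_iff: "u \<in> pats J \<Longrightarrow> x \<in> cyl J u \<longleftrightarrow> restrict x J = u"
proof
  assume u: "u \<in> pats J" and x: "x \<in> cyl J u"
  show "restrict x J = u"
  proof
    fix i show "restrict x J i = u i" using u x by (cases "i \<in> J") (auto simp: cyl_def PiE_iff extensional_def)
  qed
next
  assume "restrict x J = u" then show "x \<in> cyl J u"
    by (auto simp: cyl_def)
qed

lemma measure_emb:
  fixes \<mu> :: "(int \<Rightarrow> 'a::finite) measure"
  assumes pm: "pm \<mu>" and J: "finite J" and X: "X \<subseteq> pats J"
  shows "measure \<mu> {x. restrict x J \<in> X} = (\<Sum>u\<in>X. measure \<mu> (cyl J u))"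
proof -
  interpret prob_space \<mu> using pm unfolding pm_def by auto
  have fin: "finite X" using X finite_pats[OF J] by (auto intro: finite_subset)
  have eq: "{x. restrict x J \<in> X} = (\<Union>u\<in>X. cyl J u)"
  proof (intro equalityI subsetI)
    fix x assume "x \<in> {x. restrict x J \<in> X}"
    then show "x \<in> (\<Union>u\<in>X. cyl J u)" by (auto simp: cyl_def intro!: bexI[of _ "restrict x J"])
  next
    fix x assume "x \<in> (\<Union>u\<in>X. cyl J u)"
    then obtain u where "u \<in> X" "x \<in> cyl J u" by auto
    then show "x \<in> {x. restrict x J \<in> X}" using X in_cyl_iff[of u J x] by auto
  qed
  have disj: "disjoint_family_on (cyl J) X"
    unfolding disjoint_family_on_def
  proof (intro ballI impI)
    fix u v assume "u \<in> X" "v \<in> X" "u \<noteq> v"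
    then have "u \<in> pats J" "v \<in> pats J" using X by auto
    then show "cyl J u \<inter> cyl J v = {}" using \<open>u \<noteq> v\<close> in_cyl_iff[of u J] in_cyl_iff[of v J] by auto
  qed
  show ?thesis unfolding eq
    by (rule measure_finite_Union[OF fin _ disj]) (auto intro: cyl_sets[OF pm J])
qed

definition valid :: "(int set \<Rightarrow> (int \<Rightarrow> 'a) \<Rightarrow> real) \<Rightarrow> bool" where
  "valid c \<longleftrightarrow> (\<forall>J u. finite J \<longrightarrow> u \<in> pats J \<longrightarrow> c J u \<ge> 0) \<and> c {} (\<lambda>_. undefined) = 1 \<and>
     (\<forall>J H u. finite H \<longrightarrow> J \<subseteq> H \<longrightarrow> u \<in> pats J \<longrightarrow> c J u = (\<Sum>v\<in>{v\<in>pats H. restrict v J = u}. c H v))"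

lemma validD:
  assumes "valid c"
  shows valid_nonneg: "finite J \<Longrightarrow> u \<in> pats J \<Longrightarrow> c J u \<ge> 0"
    and valid_empty: "c {} (\<lambda>_. undefined) = 1"
    and valid_cons: "finite H \<Longrightarrow> J \<subseteq> H \<Longrightarrow> u \<in> pats J \<Longrightarrow> c J u = (\<Sum>v\<in>{v\<in>pats H. restrict v J = u}. c H v)"
proof -
  have A0: "(\<forall>J u. finite J \<longrightarrow> u \<in> pats J \<longrightarrow> c J u \<ge> 0) \<and> c {} (\<lambda>_. undefined) = 1 \<and>
     (\<forall>J H u. finite H \<longrightarrow> J \<subseteq> H \<longrightarrow> u \<in> pats J \<longrightarrow> c J u = (\<Sum>v\<in>{v\<in>pats H. restrict v J = u}. c H v))"
    using assms unfolding valid_def by assumption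
  note A = conjunct1[OF A0] conjunct1[OF conjunct2[OF A0]] conjunct2[OF conjunct2[OF A0]]
  show "finite J \<Longrightarrow> u \<in> pats J \<Longrightarrow> c J u \<ge> 0" using A(1) by simp
  show "c {} (\<lambda>_. undefined) = 1" by (fact A(2))
  show "finite H \<Longrightarrow> J \<subseteq> H \<Longrightarrow> u \<in> pats J \<Longrightarrow> c J u = (\<Sum>v\<in>{v\<in>pats H. restrict v J = u}. c H v)"
    by (rule A(3)[rule_format]) (assumption+)
qed

lemma valid_sum1:
  assumes "valid c" "finite H"
  shows "(\<Sum>v\<in>pats H. c H v) = 1"
proof -
  have e: "{v\<in>pats H. restrict v {} = (\<lambda>_. undefined)} = pats H" by auto
  have "c {} (\<lambda>_. undefined) = (\<Sum>v\<in>{v\<in>pats H. restrict v {} = (\<lambda>_. undefined)}. c H v)"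
    using assms by (intro valid_cons) auto
  also have "\<dots> = (\<Sum>v\<in>pats H. c H v)" by (simp only: e)
  finally show ?thesis using valid_empty[OF assms(1)] by simp
qed

lemma valid_le1:
  fixes c :: "int set \<Rightarrow> (int \<Rightarrow> 'a::finite) \<Rightarrow> real"
  assumes "valid c" "finite H" "u \<in> pats H"
  shows "c H u \<le> 1"
proof -
  have nn: "\<forall>v\<in>pats H. c H v \<ge> 0" using assms valid_nonneg by blast
  have "c H u \<le> (\<Sum>v\<in>pats H. c H v)"
    using assms nn by (intro member_le_sum finite_pats) auto
  then show ?thesis using valid_sum1[OF assms(1,2)] by simp
qed

definition mfam :: "(int \<Rightarrow> 'a) measure \<Rightarrow> int set \<Rightarrow> (int \<Rightarrow> 'a) \<Rightarrow> real" where
  "mfam \<mu> J u = measure \<mu> (cyl J u)"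

lemma valid_mfam:
  fixes \<mu> :: "(int \<Rightarrow> 'a::finite) measure"
  assumes pm: "pm \<mu>" shows "valid (mfam \<mu>)"
proof -
  interpret prob_space \<mu> using pm unfolding pm_def by auto
  have "cyl {} (\<lambda>_. undefined) = space \<mu>" using pm_space[OF pm] by (auto simp: cyl_def)
  then have 1: "mfam \<mu> {} (\<lambda>_. undefined) = 1" by (simp add: mfam_def prob_space)
  have "mfam \<mu> J u = (\<Sum>v\<in>{v\<in>pats H. restrict v J = u}. mfam \<mu> H v)"
    if H: "finite H" "J \<subseteq> H" "u \<in> pats J" for J H u
  proof -
    have "restrict (restrict x H) J = restrict x J" for x :: "int \<Rightarrow> 'a"
      using H(2) by (intro ext) (auto simp: restrict_def)
    then have "{x. restrict x H \<in> {v\<in>pats H. restrict v J = u}} = {x. restrict x J = u}"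
      by auto
    also have "\<dots> = cyl J u" using in_cyl_iff[OF H(3)] by auto
    finally have "cyl J u = {x. restrict x H \<in> {v\<in>pats H. restrict v J = u}}" by simp
    then have "measure \<mu> (cyl J u) = measure \<mu> {x. restrict x H \<in> {v\<in>pats H. restrict v J = u}}"
      by (simp only:)
    also have "\<dots> = (\<Sum>v\<in>{v\<in>pats H. restrict v J = u}. measure \<mu> (cyl H v))"
      by (rule measure_emb[OF pm H(1)]) auto
    finally show ?thesis unfolding mfam_def .
  qed
  moreover have "\<forall>J u. finite J \<longrightarrow> u \<in> pats J \<longrightarrow> mfam \<mu> J u \<ge> 0" by (simp add: mfam_def)
  ultimately show ?thesis using 1 unfolding valid_def by blast
qed

lemma sets_PiM_count: "finite J \<Longrightarrow> sets (PiM J (\<lambda>_. count_space (UNIV::'a::finite set))) = Pow (PiE J (\<lambda>_. UNIV))"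
proof -
  assume J: "finite J"
  show ?thesis
  proof (rule antisym)
    show "sets (PiM J (\<lambda>_. count_space (UNIV::'a::finite set))) \<subseteq> Pow (PiE J (\<lambda>_. UNIV))"
      using sets.sets_into_space by (fastforce simp: space_PiM)
    show "Pow (PiE J (\<lambda>_. UNIV)) \<subseteq> sets (PiM J (\<lambda>_. count_space (UNIV::'a::finite set)))"
    proof
      fix X assume X: "X \<in> Pow (PiE J (\<lambda>_. UNIV:: 'a set))"
      have fin: "finite X" 
      proof -
        have "finite (PiE J (\<lambda>_. UNIV::'a set))" using J by (intro finite_PiE) auto
        then show ?thesis using X by (auto intro: finite_subset)
      qed
      have "X = (\<Union>u\<in>X. PiE J (\<lambda>j. {u j}))"
      proof (intro equalityI subsetI)
        fix x assume "x \<in> X" then show "x \<in> (\<Union>u\<in>X. PiE J (\<lambda>j. {u j}))"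
        proof -
          have "x \<in> PiE J (\<lambda>_. UNIV)" using X \<open>x \<in> X\<close> by auto
          then have "x \<in> PiE J (\<lambda>j. {x j})" by (auto simp: PiE_iff)
          then show ?thesis using \<open>x \<in> X\<close> by auto
        qed
      next
        fix x assume "x \<in> (\<Union>u\<in>X. PiE J (\<lambda>j. {u j}))"
        then obtain u where u: "u \<in> X" "x \<in> PiE J (\<lambda>j. {u j})" by auto
        have "x = u"
        proof
          fix i show "x i = u i" using u X by (cases "i \<in> J") (auto simp: PiE_iff extensional_def)
        qed
        then show "x \<in> X" using u by simp
      qed
      also have "\<dots> \<in> sets (PiM J (\<lambda>_. count_space (UNIV::'a::finite set)))"
        using fin J by (intro sets.finite_UN sets_PiM_I_finite) auto
      finally show "X \<in> sets (PiM J (\<lambda>_. count_space (UNIV::'a::finite set)))" .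
    qed
  qed
qed


lemma prod_emb_UNIV_eq:
  fixes X :: "(int \<Rightarrow> 'a) set"
  shows "prod_emb UNIV (\<lambda>_::int. count_space (UNIV::'a set)) J X = {x. restrict x J \<in> X}"
  by (auto simp: prod_emb_def PiE_UNIV_domain)

lemma emb_as_union:
  assumes "X \<subseteq> pats J"
  shows "{x. restrict x J \<in> X} = (\<Union>u\<in>X. cyl J u)"
proof (intro equalityI subsetI)
  fix x assume "x \<in> {x. restrict x J \<in> X}"
  then show "x \<in> (\<Union>u\<in>X. cyl J u)" by (auto simp: cyl_def intro!: bexI[of _ "restrict x J"])
next
  fix x assume "x \<in> (\<Union>u\<in>X. cyl J u)"
  then obtain u where "u \<in> X" "x \<in> cyl J u" by auto
  then show "x \<in> {x. restrict x J \<in> X}" using assms in_cyl_iff[of u J x] by auto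
qed

abbreviation "Top \<equiv> product_topology (\<lambda>_::int. discrete_topology (UNIV::'a set)) (UNIV::int set)"

lemma topspace_Top: "topspace (Top::(int \<Rightarrow> 'a) topology) = UNIV"
  by (simp add: PiE_UNIV_domain)

lemma compact_Top: "compact_space (Top::(int \<Rightarrow> 'a::finite) topology)"
  by (simp add: compact_space_product_topology compact_space_discrete_topology)

lemma closed_cyl: "finite J \<Longrightarrow> closedin (Top::(int \<Rightarrow> 'a) topology) (cyl J u)"
proof (cases "J = {}")
  case True
  then have "cyl J u = topspace (Top::(int \<Rightarrow> 'a) topology)" by (simp add: topspace_Top cyl_def)
  then show ?thesis by (simp only:) (rule closedin_topspace)
next
  case False
  have "cyl J u = \<Inter> ((\<lambda>j. {x \<in> topspace (Top::(int \<Rightarrow> 'a) topology). x j \<in> {u j}}) ` J)"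
    using False by (auto simp: cyl_def topspace_Top)
  also have "closedin Top \<dots>"
  proof (rule closedin_Inter)
    show "(\<lambda>j. {x \<in> topspace (Top::(int \<Rightarrow> 'a) topology). x j \<in> {u j}}) ` J \<noteq> {}" using False by auto
    have "closedin (Top::(int \<Rightarrow> 'a) topology) {x \<in> topspace Top. x j \<in> {u j}}" for j
      by (rule closedin_continuous_map_preimage[OF continuous_map_product_projection]) auto
    then show "\<And>S. S \<in> (\<lambda>j. {x \<in> topspace (Top::(int \<Rightarrow> 'a) topology). x j \<in> {u j}}) ` J \<Longrightarrow> closedin Top S"
      by blast
  qed
  finally show ?thesis .
qed

lemma closed_emb:
  assumes "finite J" "X \<subseteq> pats J"
  shows "closedin (Top::(int \<Rightarrow> 'a::finite) topology) {x. restrict x J \<in> X}"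
proof -
  have "finite X" using assms finite_pats[OF assms(1)] by (auto intro: finite_subset)
  then show ?thesis unfolding emb_as_union[OF assms(2)]
    by (intro closedin_Union) (auto intro: closed_cyl assms)
qed

lemma build:
  fixes c :: "int set \<Rightarrow> (int \<Rightarrow> 'a::finite) \<Rightarrow> real"
  assumes c: "valid c"
  shows "\<exists>\<mu>. pm \<mu> \<and> (\<forall>J u. finite J \<longrightarrow> u \<in> pats J \<longrightarrow> measure \<mu> (cyl J u) = c J u)"
proof -
  define M where "M = (\<lambda>_::int. count_space (UNIV::'a set))"
  have embeq: "prod_emb UNIV M J X = {x. restrict x J \<in> X}" for J X
    unfolding M_def by (rule prod_emb_UNIV_eq)
  define P where "P = (\<lambda>J. point_measure (pats J) (\<lambda>u. ennreal (c J u)))"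
  have sets_P: "sets (P J) = sets (PiM J M)" if "finite J" for J
    using that by (simp add: P_def M_def sets_point_measure sets_PiM_count)
  have space_P: "space (P J) = pats J" for J by (simp add: P_def space_point_measure)
  have emP: "emeasure (P J) X = (\<Sum>u\<in>X. ennreal (c J u))" if "finite J" "X \<subseteq> pats J" for J X
    unfolding P_def using that by (intro emeasure_point_measure_finite finite_pats)
  have cons_enn: "ennreal (c J u) = (\<Sum>v\<in>{v\<in>pats H. restrict v J = u}. ennreal (c H v))"
    if "finite H" "J \<subseteq> H" "u \<in> pats J" for J H u
  proof -
    have "ennreal (c J u) = ennreal (\<Sum>v\<in>{v\<in>pats H. restrict v J = u}. c H v)"
      using valid_cons[OF c that] by simp
    also have "\<dots> = (\<Sum>v\<in>{v\<in>pats H. restrict v J = u}. ennreal (c H v))"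
      using that by (intro sum_ennreal[symmetric] valid_nonneg[OF c]) auto
    finally show ?thesis .
  qed
  interpret projective_family UNIV P M
  proof (rule projective_family.intro)
    fix J H :: "int set" assume JH: "J \<subseteq> H" "finite H" "H \<subseteq> UNIV"
    have J: "finite J" using JH finite_subset by auto
    have meas: "(\<lambda>f. restrict f J) \<in> measurable (P H) (PiM J M)"
    proof -
      have "measurable (P H) (PiM J M) = measurable (count_space (pats H)) (PiM J M)"
        by (rule measurable_cong_sets) (auto simp: P_def sets_point_measure)
      then show ?thesis by (auto simp: M_def space_PiM)
    qed
    show "P J = distr (P H) (PiM J M) (\<lambda>f. restrict f J)"
    proof (rule measure_eqI)
      show "sets (P J) = sets (distr (P H) (PiM J M) (\<lambda>f. restrict f J))"
        using sets_P[OF J] by simp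
      fix X assume X: "X \<in> sets (P J)"
      then have Xs: "X \<subseteq> pats J" by (simp add: P_def sets_point_measure)
      have "emeasure (distr (P H) (PiM J M) (\<lambda>f. restrict f J)) X
          = emeasure (P H) ((\<lambda>f. restrict f J) -` X \<inter> space (P H))"
        using X sets_P[OF J] by (intro emeasure_distr meas) auto
      also have "(\<lambda>f. restrict f J) -` X \<inter> space (P H) = {v\<in>pats H. restrict v J \<in> X}"
        by (auto simp: space_P)
      also have "emeasure (P H) \<dots> = (\<Sum>v\<in>{v\<in>pats H. restrict v J \<in> X}. ennreal (c H v))"
        using JH by (intro emP) auto
      also have "\<dots> = (\<Sum>u\<in>X. \<Sum>v\<in>{v\<in>{v\<in>pats H. restrict v J \<in> X}. restrict v J = u}. ennreal (c H v))"
      proof (rule sum.group[symmetric])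
        show "finite {v\<in>pats H. restrict v J \<in> X}"
          by (rule finite_subset[OF _ finite_pats[OF JH(2)]]) auto
        show "finite X" by (rule finite_subset[OF Xs finite_pats[OF J]])
      qed auto
      also have "\<dots> = (\<Sum>u\<in>X. ennreal (c J u))"
      proof (rule sum.cong[OF refl])
        fix u assume u: "u \<in> X"
        have "{v\<in>{v\<in>pats H. restrict v J \<in> X}. restrict v J = u} = {v\<in>pats H. restrict v J = u}"
          using u by auto
        then show "(\<Sum>v\<in>{v\<in>{v\<in>pats H. restrict v J \<in> X}. restrict v J = u}. ennreal (c H v)) = ennreal (c J u)"
          using cons_enn[of H J u] JH u Xs by auto
      qed
      also have "\<dots> = emeasure (P J) X" using J Xs by (simp add: emP)
      finally show "emeasure (P J) X = emeasure (distr (P H) (PiM J M) (\<lambda>f. restrict f J)) X" ..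
    qed
  next
    fix J :: "int set" assume J: "finite J" and "J \<subseteq> UNIV"
    show "prob_space (P J)"
    proof (rule prob_spaceI)
      have "emeasure (P J) (space (P J)) = (\<Sum>u\<in>pats J. ennreal (c J u))"
        using J by (simp add: space_P emP)
      also have "\<dots> = ennreal (\<Sum>u\<in>pats J. c J u)"
        using J by (intro sum_ennreal valid_nonneg[OF c]) auto
      also have "\<dots> = 1" using valid_sum1[OF c J] by simp
      finally show "emeasure (P J) (space (P J)) = 1" .
    qed
  qed
  have cont: "(\<Inter>i. emb UNIV (Js i) (Xs i)) \<noteq> {}"
    if "\<And>i. Js i \<subseteq> UNIV" "incseq Js" "\<And>i. finite (Js i)" "\<And>i. Xs i \<in> sets (PiM (Js i) M)"
       "decseq (\<lambda>i. emb UNIV (Js i) (Xs i))" "0 < (INF i. P (Js i) (Xs i))" for Js Xs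
  proof -
    have Xs: "Xs i \<subseteq> pats (Js i)" for i
      using that(4)[of i] that(3)[of i] by (simp add: M_def sets_PiM_count)
    have eq: "emb UNIV (Js i) (Xs i) = {x. restrict x (Js i) \<in> Xs i}" for i
      unfolding M_def by (rule prod_emb_UNIV_eq)
    show ?thesis
    proof (rule compact_space_imp_nest[OF compact_Top])
      show "closedin Top (emb UNIV (Js n) (Xs n))" for n
        unfolding eq using that(3) Xs by (intro closed_emb) auto
      show "decseq (\<lambda>i. emb UNIV (Js i) (Xs i))" by fact
      show "emb UNIV (Js n) (Xs n) \<noteq> {}" for n
      proof -
        have "0 < P (Js n) (Xs n)"
          using that(6) by (rule order.strict_trans2) (rule INF_lower, simp)
        then have "Xs n \<noteq> {}" by auto
        then obtain u where "u \<in> Xs n" by auto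
        then have "u \<in> emb UNIV (Js n) (Xs n)" using Xs[of n] unfolding eq by auto
        then show ?thesis by auto
      qed
    qed
  qed
  have lim_eq: "emeasure lim (emb UNIV J X) = P J X" if "finite J" "X \<in> sets (PiM J M)" for J X
    by (rule emeasure_lim[OF that(1) _ that(2) cont]) auto
  have sets_lim': "sets lim = sets conf_space"
  proof -
    have "sets lim = sets (PiM UNIV M)" by (rule sets_lim)
    then show ?thesis by (simp only: conf_space_def M_def)
  qed
  have "prob_space lim"
  proof (rule prob_spaceI)
    have "space lim = space (PiM UNIV M)" by (rule space_lim)
    also have "\<dots> = UNIV" by (simp add: M_def space_PiM PiE_UNIV_domain)
    also have "UNIV = emb UNIV {} {\<lambda>_. undefined}"
      unfolding embeq by auto
    finally have "space lim = emb UNIV {} {\<lambda>_. undefined}" .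
    moreover have "{\<lambda>_. undefined} \<in> sets (PiM {} M)"
      by (simp add: M_def sets_PiM_count)
    ultimately have "emeasure lim (space lim) = P {} {\<lambda>_. undefined}"
      using lim_eq[of "{}"] by simp
    also have "\<dots> = 1" using emP[of "{}" "{\<lambda>_. undefined}"] valid_empty[OF c] by simp
    finally show "emeasure lim (space lim) = 1" .
  qed
  then have pm: "pm lim" using sets_lim' by (simp add: pm_def)
  have "measure lim (cyl J u) = c J u" if J: "finite J" and u: "u \<in> pats J" for J u
  proof -
    have "cyl J u = emb UNIV J {u}"
      unfolding embeq using in_cyl_iff[OF u] by auto
    moreover have "{u} \<in> sets (PiM J M)"
      using J u by (simp add: M_def sets_PiM_count)
    ultimately have "emeasure lim (cyl J u) = P J {u}"
      using lim_eq[OF J] by simp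
    also have "\<dots> = ennreal (c J u)" using emP[of J "{u}"] J u by simp
    finally show ?thesis using valid_nonneg[OF c J u] by (simp add: measure_def)
  qed
  with pm show ?thesis by blast
qed

lemma unique_pm:
  fixes \<mu> \<nu> :: "(int \<Rightarrow> 'a::finite) measure"
  assumes pm1: "pm \<mu>" and pm2: "pm \<nu>"
    and eq: "\<And>J u. finite J \<Longrightarrow> u \<in> pats J \<Longrightarrow> measure \<mu> (cyl J u) = measure \<nu> (cyl J u)"
  shows "\<mu> = \<nu>"
proof (rule measure_eqI_PiM_infinite[where I=UNIV and M="\<lambda>_. count_space UNIV"])
  show "sets \<mu> = sets (PiM UNIV (\<lambda>_. count_space (UNIV::'a set)))"
    using pm1 by (simp add: pm_def conf_space_def)
  show "sets \<nu> = sets (PiM UNIV (\<lambda>_. count_space (UNIV::'a set)))"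
    using pm2 by (simp add: pm_def conf_space_def)
  show "finite_measure \<mu>" using pm1 unfolding pm_def by (auto intro: prob_space.finite_measure)
  fix A :: "int \<Rightarrow> 'a set" and J :: "int set" assume J: "finite J"
  interpret p1: prob_space \<mu> using pm1 unfolding pm_def by auto
  interpret p2: prob_space \<nu> using pm2 unfolding pm_def by auto
  have sub: "PiE J A \<subseteq> pats J" by auto
  have "measure \<mu> {x. restrict x J \<in> PiE J A} = measure \<nu> {x. restrict x J \<in> PiE J A}"
    using measure_emb[OF pm1 J sub] measure_emb[OF pm2 J sub] eq[OF J] sub
    by (auto intro!: sum.cong)
  then show "emeasure \<mu> (prod_emb UNIV (\<lambda>_. count_space UNIV) J (PiE J A)) =
             emeasure \<nu> (prod_emb UNIV (\<lambda>_. count_space UNIV) J (PiE J A))"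
    unfolding prod_emb_UNIV_eq by (simp add: p1.emeasure_eq_measure p2.emeasure_eq_measure)
qed

lemma shift_meas_conf: "shift \<in> measurable conf_space conf_space"
  unfolding conf_space_def shift_def
  by (rule measurable_PiM_single') (auto simp: PiE_UNIV_domain intro!: measurable_component_singleton)

lemma shift_meas: "pm \<mu> \<Longrightarrow> shift \<in> measurable \<mu> \<mu>"
  using shift_meas_conf unfolding pm_def by (simp add: measurable_cong_sets[of \<mu> conf_space \<mu> conf_space])

lemma shift_pre_cyl: "shift -` cyl J w = cyl ((\<lambda>i. i + 1) ` J) (\<lambda>i. w (i - 1))"
  by (auto simp: shift_def cyl_def)

definition sinv :: "(int set \<Rightarrow> (int \<Rightarrow> 'a) \<Rightarrow> real) \<Rightarrow> bool" where
  "sinv c \<longleftrightarrow> (\<forall>J w. finite J \<longrightarrow>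
     c ((\<lambda>i. i + 1) ` J) (restrict (\<lambda>i. w (i - 1)) ((\<lambda>i. i + 1) ` J)) = c J (restrict w J))"

lemma Minv_imp:
  assumes "\<mu> \<in> Minv" shows "pm \<mu>" "sinv (mfam \<mu>)"
proof -
  show pm: "pm \<mu>" using assms by (simp add: Minv_def pm_def)
  have d: "distr \<mu> \<mu> shift = \<mu>" using assms by (simp add: Minv_def)
  show "sinv (mfam \<mu>)" unfolding sinv_def mfam_def cyl_restrict
  proof (intro allI impI)
    fix J :: "int set" and w assume J: "finite J"
    have "measure \<mu> (cyl J w) = measure (distr \<mu> \<mu> shift) (cyl J w)" using d by simp
    also have "\<dots> = measure \<mu> (shift -` cyl J w \<inter> space \<mu>)"
      using J pm by (intro measure_distr shift_meas cyl_sets)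
    also have "\<dots> = measure \<mu> (cyl ((\<lambda>i. i + 1) ` J) (\<lambda>i. w (i - 1)))"
      by (simp add: shift_pre_cyl pm_space[OF pm])
    finally show "measure \<mu> (cyl ((\<lambda>i. i + 1) ` J) (\<lambda>i. w (i - 1))) = measure \<mu> (cyl J w)" by simp
  qed
qed

lemma Minv_intro:
  fixes \<mu> :: "(int \<Rightarrow> 'a::finite) measure"
  assumes pm: "pm \<mu>" and s: "sinv (mfam \<mu>)"
  shows "\<mu> \<in> Minv"
proof -
  interpret prob_space \<mu> using pm unfolding pm_def by auto
  have pmd: "pm (distr \<mu> \<mu> shift)"
    using pm shift_meas[OF pm] by (auto simp: pm_def intro: prob_space_distr)
  have "distr \<mu> \<mu> shift = \<mu>"
  proof (rule unique_pm[OF pmd pm])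
    fix J :: "int set" and u :: "int \<Rightarrow> 'a" assume J: "finite J" and u: "u \<in> pats J"
    have "measure (distr \<mu> \<mu> shift) (cyl J u) = measure \<mu> (shift -` cyl J u \<inter> space \<mu>)"
      using J pm by (intro measure_distr shift_meas cyl_sets)
    also have "\<dots> = measure \<mu> (cyl ((\<lambda>i. i + 1) ` J) (\<lambda>i. u (i - 1)))"
      by (simp add: shift_pre_cyl pm_space[OF pm])
    also have "\<dots> = measure \<mu> (cyl J u)"
      using s J unfolding sinv_def mfam_def cyl_restrict by blast
    finally show "measure (distr \<mu> \<mu> shift) (cyl J u) = measure \<mu> (cyl J u)" .
  qed
  then show ?thesis using pm by (simp add: Minv_def pm_def)
qed

lemma Minv_nonempty: "\<exists>\<mu>. \<mu> \<in> (Minv :: (int \<Rightarrow> 'a::finite) measure set)"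
proof -
  obtain a :: 'a where True by auto
  define \<mu> where "\<mu> = return conf_space (\<lambda>_::int. a)"
  have pm: "pm \<mu>" unfolding pm_def \<mu>_def by (auto intro: prob_space_return)
  have "distr \<mu> \<mu> shift = distr \<mu> conf_space shift"
    by (rule distr_cong) (auto simp: \<mu>_def)
  also have "\<dots> = return conf_space (shift (\<lambda>_. a))"
    unfolding \<mu>_def by (rule distr_return[OF shift_meas_conf]) simp
  also have "shift (\<lambda>_. a) = (\<lambda>_::int. a)" by (simp add: shift_def)
  finally have "distr \<mu> \<mu> shift = \<mu>" by (simp add: \<mu>_def)
  then have "\<mu> \<in> Minv" using pm by (simp add: Minv_def pm_def)
  then show ?thesis by blast
qed

lemma localpat_restrict:
  assumes "\<And>j. j \<in> N \<Longrightarrow> i + j \<in> H"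
  shows "localpat N (restrict x H) i = localpat N x i"
  using assms by (auto simp: localpat_def restrict_def)

lemma kernel_restrict:
  assumes "\<And>i j. i \<in> J \<Longrightarrow> j \<in> N \<Longrightarrow> i + j \<in> H"
  shows "PCA_kernel N g (restrict x H) J w = PCA_kernel N g x J w"
  unfolding PCA_kernel_def using assms by (intro prod.cong refl) (simp add: localpat_restrict)

lemma kernel_sum:
  fixes \<mu> :: "(int \<Rightarrow> 'a::finite) measure"
  assumes pm: "pm \<mu>" and H: "finite H" and sub: "\<And>i j. i \<in> J \<Longrightarrow> j \<in> N \<Longrightarrow> i + j \<in> H"
  shows "integrable \<mu> (\<lambda>x. PCA_kernel N g x J w)"
    and "(\<integral>x. PCA_kernel N g x J w \<partial>\<mu>) = (\<Sum>v\<in>pats H. measure \<mu> (cyl H v) * PCA_kernel N g v J w)"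
proof -
  interpret prob_space \<mu> using pm unfolding pm_def by auto
  have pw: "PCA_kernel N g x J w = (\<Sum>v\<in>pats H. indicator (cyl H v) x * PCA_kernel N g v J w)" for x
  proof -
    have "(\<Sum>v\<in>pats H. indicator (cyl H v) x * PCA_kernel N g v J w)
        = (\<Sum>v\<in>pats H. if v = restrict x H then PCA_kernel N g v J w else 0)"
      by (intro sum.cong refl) (auto simp: indicator_def in_cyl_iff)
    also have "\<dots> = PCA_kernel N g (restrict x H) J w"
      by (subst sum.delta[OF finite_pats[OF H]]) auto
    also have "\<dots> = PCA_kernel N g x J w" using sub by (rule kernel_restrict)
    finally show ?thesis by simp
  qed
  have int: "integrable \<mu> (\<lambda>x. indicator (cyl H v) x * PCA_kernel N g v J w)" for v
  proof (rule integrable_mult_left, rule integrable_real_indicator)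
    show "cyl H v \<in> sets \<mu>" by (rule cyl_sets[OF pm H])
    show "emeasure \<mu> (cyl H v) < \<infinity>" using emeasure_finite[of "cyl H v"] by (simp add: less_top[symmetric])
  qed
  have pwf: "(\<lambda>x. PCA_kernel N g x J w) = (\<lambda>x. \<Sum>v\<in>pats H. indicator (cyl H v) x * PCA_kernel N g v J w)"
    by (rule ext) (rule pw)
  show "integrable \<mu> (\<lambda>x. PCA_kernel N g x J w)"
    by (subst pwf) (intro Bochner_Integration.integrable_sum int)
  have "(\<integral>x. PCA_kernel N g x J w \<partial>\<mu>) = (\<integral>x. (\<Sum>v\<in>pats H. indicator (cyl H v) x * PCA_kernel N g v J w) \<partial>\<mu>)"
    by (subst pwf) (rule refl)
  also have "\<dots> = (\<Sum>v\<in>pats H. (\<integral>x. indicator (cyl H v) x * PCA_kernel N g v J w \<partial>\<mu>))"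
    by (intro Bochner_Integration.integral_sum int)
  also have "\<dots> = (\<Sum>v\<in>pats H. measure \<mu> (cyl H v) * PCA_kernel N g v J w)"
  proof (rule sum.cong[OF refl])
    fix v
    have "(\<integral>x. indicator (cyl H v) x * PCA_kernel N g v J w \<partial>\<mu>) = (\<integral>x. indicator (cyl H v) x \<partial>\<mu>) * PCA_kernel N g v J w"
      by (rule integral_mult_left_zero)
    also have "(\<integral>x. indicator (cyl H v) x \<partial>\<mu>) = measure \<mu> (cyl H v)"
      using Bochner_Integration.integral_indicator[of \<mu> "cyl H v"] by (simp add: pm_space[OF pm])
    finally show "(\<integral>x. indicator (cyl H v) x * PCA_kernel N g v J w \<partial>\<mu>) = measure \<mu> (cyl H v) * PCA_kernel N g v J w" .
  qed
  finally show "(\<integral>x. PCA_kernel N g x J w \<partial>\<mu>) = (\<Sum>v\<in>pats H. measure \<mu> (cyl H v) * PCA_kernel N g v J w)" .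
qed

lemma prod_sum_restrict:
  fixes g :: "int \<Rightarrow> 'a::finite \<Rightarrow> real"
  assumes H: "finite H" and JH: "J \<subseteq> H" and u: "u \<in> pats J" and g1: "\<And>i. i \<in> H \<Longrightarrow> (\<Sum>a\<in>UNIV. g i a) = 1"
  shows "(\<Sum>v\<in>{v\<in>pats H. restrict v J = u}. \<Prod>i\<in>H. g i (v i)) = (\<Prod>i\<in>J. g i (u i))"
proof -
  define B where "B = (\<lambda>i. if i \<in> J then {u i} else (UNIV::'a set))"
  have S: "{v\<in>pats H. restrict v J = u} = PiE H B"
  proof (intro equalityI subsetI)
    fix v assume "v \<in> {v\<in>pats H. restrict v J = u}"
    then show "v \<in> PiE H B" using JH by (auto simp: B_def PiE_iff restrict_def)
  next
    fix v assume v: "v \<in> PiE H B"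
    have "restrict v J = u"
    proof
      fix i show "restrict v J i = u i"
      proof (cases "i \<in> J")
        case True
        then have "i \<in> H" using JH by auto
        then have "v i \<in> B i" using v by (auto simp: PiE_iff)
        then show ?thesis using True by (simp add: B_def)
      next
        case False then show ?thesis using u by (auto simp: PiE_iff extensional_def)
      qed
    qed
    then show "v \<in> {v\<in>pats H. restrict v J = u}" using v by (auto simp: PiE_iff)
  qed
  have "(\<Sum>v\<in>PiE H B. \<Prod>i\<in>H. g i (v i)) = (\<Prod>i\<in>H. \<Sum>a\<in>B i. g i a)"
    using H by (intro prod_sum_PiE[symmetric]) (auto simp: B_def)
  also have "\<dots> = (\<Prod>i\<in>H. if i \<in> J then g i (u i) else 1)"
    using g1 by (intro prod.cong refl) (auto simp: B_def)
  also have "\<dots> = (\<Prod>i\<in>J. g i (u i))"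
    using H JH by (simp add: prod.If_cases Int_absorb1)
  finally show ?thesis using S by simp
qed

lemma bw_finite:
  fixes f :: "'i \<Rightarrow> nat \<Rightarrow> real"
  assumes "finite S" "\<And>s k. s \<in> S \<Longrightarrow> \<bar>f s k\<bar> \<le> B"
  shows "\<exists>r. strict_mono r \<and> (\<forall>s\<in>S. convergent (\<lambda>k. f s (r k)))"
  using assms
proof (induction S rule: finite_induct)
  case empty
  then show ?case by (intro exI[of _ id]) (auto simp: strict_mono_def)
next
  case (insert s S)
  then obtain r where r: "strict_mono r" "\<forall>t\<in>S. convergent (\<lambda>k. f t (r k))" by auto
  obtain r' where r': "strict_mono r'" "monoseq (\<lambda>k. f s (r (r' k)))"
    using seq_monosub[of "\<lambda>k. f s (r k)"] by auto
  have "Bseq (\<lambda>k. f s (r (r' k)))" using insert.prems by (intro BseqI'[of _ B]) auto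
  then have cs: "convergent (\<lambda>k. f s (r (r' k)))" using r'(2) by (rule Bseq_monoseq_convergent)
  have "convergent (\<lambda>k. f t (r (r' k)))" if "t \<in> S" for t
    using convergent_subseq_convergent[OF r(2)[rule_format, OF that] r'(1)] by (simp add: o_def)
  moreover have "strict_mono (\<lambda>k. r (r' k))" using strict_mono_o[OF r(1) r'(1)] by (simp add: o_def)
  ultimately show ?case using cs by (intro exI[of _ "\<lambda>k. r (r' k)"]) auto
qed

definition win :: "nat \<Rightarrow> int set" where "win n = {- int n..int n}"

lemma finite_win[simp]: "finite (win n)" by (simp add: win_def)

lemma ex_win: "finite J \<Longrightarrow> \<exists>n. J \<subseteq> win n"
proof -
  assume J: "finite J"
  have "i \<in> win (\<Sum>j\<in>J. nat \<bar>j\<bar>)" if "i \<in> J" for i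
  proof -
    have "nat \<bar>i\<bar> \<le> (\<Sum>j\<in>J. nat \<bar>j\<bar>)" using J that by (intro member_le_sum) auto
    then have h: "\<bar>i\<bar> \<le> int (\<Sum>j\<in>J. nat \<bar>j\<bar>)" by (simp only: nat_le_iff)
    show ?thesis using h unfolding win_def by (simp only: atLeastAtMost_iff) arith
  qed
  then show ?thesis by blast
qed

lemma compact_fam:
  fixes cs :: "nat \<Rightarrow> int set \<Rightarrow> (int \<Rightarrow> 'a::finite) \<Rightarrow> real"
  assumes v: "\<And>n. valid (cs n)"
  shows "\<exists>r c. strict_mono r \<and> valid c \<and>
     (\<forall>J u. finite J \<longrightarrow> u \<in> pats J \<longrightarrow> (\<lambda>k. cs (r k) J u) \<longlonglongrightarrow> c J u)"
proof -
  define P where "P = (\<lambda>n (s::nat \<Rightarrow> nat). \<forall>u\<in>pats (win n). convergent (\<lambda>k. cs (s k) (win n) u))"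
  interpret subseqs P
  proof
    fix n and s :: "nat \<Rightarrow> nat" assume "strict_mono s"
    have "\<exists>r. strict_mono r \<and> (\<forall>u\<in>pats (win n). convergent (\<lambda>k. cs (s (r k)) (win n) u))"
    proof (rule bw_finite[where f="\<lambda>u k. cs (s k) (win n) u" and B=1])
      show "finite (pats (win n) :: (int \<Rightarrow> 'a) set)" by (simp add: finite_pats)
      fix u :: "int \<Rightarrow> 'a" and k assume "u \<in> pats (win n)"
      then show "\<bar>cs (s k) (win n) u\<bar> \<le> 1"
        using valid_nonneg[OF v, of "win n" u] valid_le1[OF v, of "win n" u] by auto
    qed
    then show "\<exists>r'. strict_mono r' \<and> P n (s \<circ> r')" by (auto simp: P_def o_def)
  qed
  have stable: "P n (s \<circ> r)" if "strict_mono r" "P n s" for r s n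
    using that convergent_subseq_convergent[OF _ that(1)] unfolding P_def by (auto simp: o_def)
  have conv_win: "convergent (\<lambda>k. cs (diagseq k) (win n) u)" if "u \<in> pats (win n)" for n u
  proof -
    have "P n (diagseq \<circ> ((+) (Suc n)))" by (rule diagseq_holds) (rule stable)
    then have "convergent (\<lambda>k. cs (diagseq (k + Suc n)) (win n) u)"
      using that unfolding P_def by (simp add: o_def add.commute)
    then show ?thesis by (rule convergent_ignore_initial_segment[THEN iffD1])
  qed
  have conv: "convergent (\<lambda>k. cs (diagseq k) J u)" if J: "finite J" and u: "u \<in> pats J" for J u
  proof -
    obtain n where n: "J \<subseteq> win n" using ex_win[OF J] by auto
    have eq: "(\<lambda>k. cs (diagseq k) J u) = (\<lambda>k. \<Sum>v\<in>{v\<in>pats (win n). restrict v J = u}. cs (diagseq k) (win n) v)"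
      using n u by (intro ext valid_cons[OF v]) auto
    have "convergent (\<lambda>k. \<Sum>v\<in>{v\<in>pats (win n). restrict v J = u}. cs (diagseq k) (win n) v)"
      by (intro convergent_sum conv_win) auto
    then show ?thesis by (simp only: eq)
  qed
  define c where "c = (\<lambda>J u. lim (\<lambda>k. cs (diagseq k) J u))"
  have lim: "(\<lambda>k. cs (diagseq k) J u) \<longlonglongrightarrow> c J u" if "finite J" "u \<in> pats J" for J u
    unfolding c_def using conv[OF that] by (simp add: convergent_LIMSEQ_iff)
  have "valid c"
    unfolding valid_def
  proof (intro conjI allI impI)
    fix J :: "int set" and u :: "int \<Rightarrow> 'a" assume J: "finite J" and u: "u \<in> pats J"
    show "0 \<le> c J u"
      by (rule LIMSEQ_le_const[OF lim[OF J u]]) (auto intro: valid_nonneg[OF v J u])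
  next
    have "(\<lambda>k. cs (diagseq k) {} (\<lambda>_. undefined)) \<longlonglongrightarrow> 1"
      by (simp add: valid_empty[OF v])
    then show "c {} (\<lambda>_. undefined) = 1"
      using lim[of "{}" "\<lambda>_. undefined"] by (auto intro: LIMSEQ_unique)
  next
    fix J H :: "int set" and u :: "int \<Rightarrow> 'a" assume H: "finite H" and JH: "J \<subseteq> H" and u: "u \<in> pats J"
    have J: "finite J" using H JH finite_subset by auto
    have "(\<lambda>k. cs (diagseq k) J u) = (\<lambda>k. \<Sum>v\<in>{v\<in>pats H. restrict v J = u}. cs (diagseq k) H v)"
      using H JH u by (intro ext valid_cons[OF v]) auto
    moreover have "(\<lambda>k. \<Sum>v\<in>{v\<in>pats H. restrict v J = u}. cs (diagseq k) H v) \<longlonglongrightarrow> (\<Sum>v\<in>{v\<in>pats H. restrict v J = u}. c H v)"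
      using H by (intro tendsto_sum lim) auto
    ultimately show "c J u = (\<Sum>v\<in>{v\<in>pats H. restrict v J = u}. c H v)"
      using lim[OF J u] by (auto intro: LIMSEQ_unique)
  qed
  then show ?thesis using subseq_diagseq lim by blast
qed

lemma sinv_lim:
  fixes cs :: "nat \<Rightarrow> int set \<Rightarrow> (int \<Rightarrow> 'a) \<Rightarrow> real"
  assumes s: "\<And>k. sinv (cs k)"
    and lim: "\<And>J u. finite J \<Longrightarrow> u \<in> pats J \<Longrightarrow> (\<lambda>k. cs k J u) \<longlonglongrightarrow> c J u"
  shows "sinv c"
  unfolding sinv_def
proof (intro allI impI)
  fix J :: "int set" and w :: "int \<Rightarrow> 'a" assume J: "finite J"
  let ?J = "(\<lambda>i. i + 1) ` J" and ?w = "restrict (\<lambda>i. w (i - 1)) ((\<lambda>i. i + 1) ` J)"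
  have "(\<lambda>k. cs k ?J ?w) \<longlonglongrightarrow> c ?J ?w" using J by (intro lim) auto
  moreover have "(\<lambda>k. cs k ?J ?w) = (\<lambda>k. cs k J (restrict w J))"
    using s J unfolding sinv_def by blast
  moreover have "(\<lambda>k. cs k J (restrict w J)) \<longlonglongrightarrow> c J (restrict w J)" using J by (intro lim) auto
  ultimately show "c ?J ?w = c J (restrict w J)" by (auto intro: LIMSEQ_unique)
qed

lemma valid_avg:
  fixes cs :: "nat \<Rightarrow> int set \<Rightarrow> (int \<Rightarrow> 'a) \<Rightarrow> real"
  assumes v: "\<And>k. valid (cs k)"
  shows "valid (\<lambda>J u. (\<Sum>k\<le>n. cs k J u) / (real n + 1))"
  unfolding valid_def
proof (intro conjI allI impI)
  fix J :: "int set" and u :: "int \<Rightarrow> 'a" assume "finite J" "u \<in> pats J"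
  then show "0 \<le> (\<Sum>k\<le>n. cs k J u) / (real n + 1)"
    by (intro divide_nonneg_nonneg sum_nonneg valid_nonneg[OF v]) auto
next
  show "(\<Sum>k\<le>n. cs k {} (\<lambda>_. undefined)) / (real n + 1) = 1"
    by (simp add: valid_empty[OF v])
next
  fix J H :: "int set" and u :: "int \<Rightarrow> 'a" assume H: "finite H" and JH: "J \<subseteq> H" and u: "u \<in> pats J"
  have "(\<Sum>k\<le>n. cs k J u) = (\<Sum>k\<le>n. \<Sum>v\<in>{v\<in>pats H. restrict v J = u}. cs k H v)"
    using H JH u by (intro sum.cong refl valid_cons[OF v])
  also have "\<dots> = (\<Sum>v\<in>{v\<in>pats H. restrict v J = u}. \<Sum>k\<le>n. cs k H v)"
    by (rule sum.swap)
  finally show "(\<Sum>k\<le>n. cs k J u) / (real n + 1) = (\<Sum>v\<in>{v\<in>pats H. restrict v J = u}. (\<Sum>k\<le>n. cs k H v) / (real n + 1))"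
    by (simp add: sum_divide_distrib)
qed

lemma sinv_avg:
  assumes s: "\<And>k. sinv (cs k)"
  shows "sinv (\<lambda>J u. (\<Sum>k\<le>n. cs k J u) / (real n + 1))"
  using s unfolding sinv_def by simp

definition nbh :: "int set \<Rightarrow> int set \<Rightarrow> int set" where
  "nbh N J = (\<Union>i\<in>J. (\<lambda>j. i + j) ` N)"

lemma finite_nbh: "finite N \<Longrightarrow> finite J \<Longrightarrow> finite (nbh N J)"
  by (simp add: nbh_def)

lemma in_nbh: "i \<in> J \<Longrightarrow> j \<in> N \<Longrightarrow> i + j \<in> nbh N J"
  by (auto simp: nbh_def)

lemma localpat_pats: "localpat N x i \<in> pats N"
  by (simp add: localpat_def)

lemma kernel_restrict_w: "PCA_kernel N g x J (restrict w J) = PCA_kernel N g x J w"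
  unfolding PCA_kernel_def by (intro prod.cong refl) simp

definition Fam :: "int set \<Rightarrow> ((int \<Rightarrow> 'a) \<Rightarrow> 'a \<Rightarrow> real) \<Rightarrow> (int \<Rightarrow> 'a) measure \<Rightarrow> int set \<Rightarrow> (int \<Rightarrow> 'a) \<Rightarrow> real" where
  "Fam N g \<mu> J u = (\<integral>x. PCA_kernel N g x J u \<partial>\<mu>)"

lemma sinv_transfer:
  assumes s: "sinv c" and eq: "\<And>J u. finite J \<Longrightarrow> u \<in> pats J \<Longrightarrow> mfam \<nu> J u = c J u"
  shows "sinv (mfam \<nu>)"
  unfolding sinv_def
proof (intro allI impI)
  fix J :: "int set" and w :: "int \<Rightarrow> 'a" assume J: "finite J"
  let ?J = "(\<lambda>i. i + 1) ` J"
  have "mfam \<nu> ?J (restrict (\<lambda>i. w (i - 1)) ?J) = c ?J (restrict (\<lambda>i. w (i - 1)) ?J)"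
    using J by (intro eq) auto
  also have "\<dots> = c J (restrict w J)" using s J unfolding sinv_def by blast
  also have "\<dots> = mfam \<nu> J (restrict w J)" using J by (intro eq[symmetric]) auto
  finally show "mfam \<nu> ?J (restrict (\<lambda>i. w (i - 1)) ?J) = mfam \<nu> J (restrict w J)" .
qed

locale stoch =
  fixes N :: "int set" and g :: "(int \<Rightarrow> 'a::finite) \<Rightarrow> 'a \<Rightarrow> real"
  assumes finN: "finite N"
    and g_nonneg: "\<And>u b. u \<in> pats N \<Longrightarrow> g u b \<ge> 0"
    and g_sum: "\<And>u. u \<in> pats N \<Longrightarrow> (\<Sum>b\<in>UNIV. g u b) = 1"
begin

lemma kernel_nonneg: "PCA_kernel N g x J w \<ge> 0"
  unfolding PCA_kernel_def by (intro prod_nonneg g_nonneg localpat_pats)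

lemma kernel_int:
  assumes pm: "pm \<mu>" and J: "finite J"
  shows "integrable \<mu> (\<lambda>x. PCA_kernel N g x J w)"
  by (rule kernel_sum(1)[OF pm finite_nbh[OF finN J] in_nbh])

lemma kernel_fam_sum:
  assumes pm: "pm \<mu>" and J: "finite J"
  shows "Fam N g \<mu> J w = (\<Sum>v\<in>pats (nbh N J). measure \<mu> (cyl (nbh N J) v) * PCA_kernel N g v J w)"
  unfolding Fam_def by (rule kernel_sum(2)[OF pm finite_nbh[OF finN J] in_nbh])

lemma valid_Fam:
  assumes pm: "pm \<mu>" shows "valid (Fam N g \<mu>)"
  unfolding valid_def
proof (intro conjI allI impI)
  interpret prob_space \<mu> using pm unfolding pm_def by auto
  fix J :: "int set" and u :: "int \<Rightarrow> 'a"
  show "0 \<le> Fam N g \<mu> J u" unfolding Fam_def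
    by (rule Bochner_Integration.integral_nonneg) (rule kernel_nonneg)
next
  interpret prob_space \<mu> using pm unfolding pm_def by auto
  show "Fam N g \<mu> {} (\<lambda>_. undefined) = 1"
    unfolding Fam_def PCA_kernel_def using prob_space by simp
next
  fix J H :: "int set" and u :: "int \<Rightarrow> 'a"
  assume H: "finite H" and JH: "J \<subseteq> H" and u: "u \<in> pats J"
  let ?S = "{v\<in>pats H. restrict v J = u}"
  have "(\<Sum>v\<in>?S. Fam N g \<mu> H v) = (\<integral>x. (\<Sum>v\<in>?S. PCA_kernel N g x H v) \<partial>\<mu>)"
    unfolding Fam_def by (rule Bochner_Integration.integral_sum[symmetric]) (rule kernel_int[OF pm H])
  also have "\<dots> = (\<integral>x. PCA_kernel N g x J u \<partial>\<mu>)"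
  proof (rule Bochner_Integration.integral_cong[OF refl])
    fix x
    show "(\<Sum>v\<in>?S. PCA_kernel N g x H v) = PCA_kernel N g x J u"
      unfolding PCA_kernel_def
      by (rule prod_sum_restrict[OF H JH u, of "\<lambda>i a. g (localpat N x i) a"]) (rule g_sum[OF localpat_pats])
  qed
  finally show "Fam N g \<mu> J u = (\<Sum>v\<in>?S. Fam N g \<mu> H v)" unfolding Fam_def by simp
qed

lemma localpat_shift: "localpat N (shift x) i = localpat N x (i + 1)"
  by (auto simp: localpat_def shift_def algebra_simps)

lemma sinv_Fam:
  assumes m: "\<mu> \<in> Minv" shows "sinv (Fam N g \<mu>)"
  unfolding sinv_def
proof (intro allI impI)
  fix J :: "int set" and w :: "int \<Rightarrow> 'a" assume J: "finite J"
  have pm: "pm \<mu>" using Minv_imp(1)[OF m] .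
  have d: "distr \<mu> \<mu> shift = \<mu>" using m by (simp add: Minv_def)
  let ?J = "(\<lambda>i. i + 1) ` J"
  have k: "PCA_kernel N g x ?J (restrict (\<lambda>i. w (i - 1)) ?J) = PCA_kernel N g (shift x) J (restrict w J)" for x
  proof -
    have "PCA_kernel N g x ?J (restrict (\<lambda>i. w (i - 1)) ?J) = (\<Prod>i\<in>?J. g (localpat N x i) (w (i - 1)))"
      unfolding PCA_kernel_def by (intro prod.cong refl) auto
    also have "\<dots> = (\<Prod>i\<in>J. g (localpat N x (i + 1)) (w i))"
      by (subst prod.reindex) (auto simp: inj_on_def)
    also have "\<dots> = PCA_kernel N g (shift x) J (restrict w J)"
      unfolding PCA_kernel_def by (intro prod.cong refl) (simp add: localpat_shift)
    finally show ?thesis .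
  qed
  have "Fam N g \<mu> J (restrict w J) = (\<integral>x. PCA_kernel N g x J (restrict w J) \<partial>(distr \<mu> \<mu> shift))"
    unfolding Fam_def d ..
  also have "\<dots> = (\<integral>x. PCA_kernel N g (shift x) J (restrict w J) \<partial>\<mu>)"
    by (rule integral_distr[OF shift_meas[OF pm] borel_measurable_integrable[OF kernel_int[OF pm J]]])
  also have "\<dots> = Fam N g \<mu> ?J (restrict (\<lambda>i. w (i - 1)) ?J)"
    unfolding Fam_def k ..
  finally show "Fam N g \<mu> ?J (restrict (\<lambda>i. w (i - 1)) ?J) = Fam N g \<mu> J (restrict w J)" by simp
qed

lemma Fop_ex:
  assumes m: "\<mu> \<in> Minv"
  shows "\<exists>\<nu>. \<nu> \<in> Minv \<and> (\<forall>J u. finite J \<longrightarrow> u \<in> pats J \<longrightarrow> mfam \<nu> J u = Fam N g \<mu> J u)"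
proof -
  obtain \<nu> where \<nu>: "pm \<nu>" "\<And>J u. finite J \<Longrightarrow> u \<in> pats J \<Longrightarrow> measure \<nu> (cyl J u) = Fam N g \<mu> J u"
    using build[OF valid_Fam[OF Minv_imp(1)[OF m]]] by blast
  have "sinv (mfam \<nu>)"
    by (rule sinv_transfer[OF sinv_Fam[OF m]]) (simp add: mfam_def \<nu>(2))
  then have "\<nu> \<in> Minv" using Minv_intro[OF \<nu>(1)] by simp
  then show ?thesis using \<nu>(2) by (auto simp: mfam_def)
qed

theorem fixed_point_ex:
  "\<exists>\<nu>. \<nu> \<in> Minv \<and> (\<forall>U w. finite U \<longrightarrow> (\<integral>x. PCA_kernel N g x U w \<partial>\<nu>) = measure \<nu> (cyl U w))"
proof -
  obtain \<mu>0 :: "(int \<Rightarrow> 'a) measure" where \<mu>0: "\<mu>0 \<in> Minv" using Minv_nonempty by blast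
  define F where "F = (\<lambda>\<mu>. SOME \<nu>. \<nu> \<in> Minv \<and> (\<forall>J u. finite J \<longrightarrow> u \<in> pats J \<longrightarrow> mfam \<nu> J u = Fam N g \<mu> J u))"
  have F: "F \<mu> \<in> Minv \<and> (\<forall>J u. finite J \<longrightarrow> u \<in> pats J \<longrightarrow> mfam (F \<mu>) J u = Fam N g \<mu> J u)" if "\<mu> \<in> Minv" for \<mu>
    unfolding F_def by (rule someI_ex[OF Fop_ex[OF that]])
  define \<mu>s where "\<mu>s = rec_nat \<mu>0 (\<lambda>_ \<mu>. F \<mu>)"
  have \<mu>s0: "\<mu>s 0 = \<mu>0" and \<mu>sS: "\<mu>s (Suc k) = F (\<mu>s k)" for k by (simp_all add: \<mu>s_def)
  have inM: "\<mu>s k \<in> Minv" for k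
  proof (induction k)
    case 0 then show ?case using \<mu>0 by (simp only: \<mu>s0)
  next
    case (Suc k) then show ?case using F[OF Suc] by (simp only: \<mu>sS)
  qed
  have pmk: "pm (\<mu>s k)" for k using Minv_imp(1)[OF inM] .
  define cs where "cs = (\<lambda>k. mfam (\<mu>s k))"
  have vcs: "valid (cs k)" for k unfolding cs_def by (rule valid_mfam[OF pmk])
  have scs: "sinv (cs k)" for k unfolding cs_def by (rule Minv_imp(2)[OF inM])
  have csS: "cs (Suc k) J u = Fam N g (\<mu>s k) J u" if "finite J" "u \<in> pats J" for k J u
    using F[OF inM[of k]] that by (simp add: cs_def \<mu>sS)
  define avg where "avg = (\<lambda>n J u. (\<Sum>k\<le>n. cs k J u) / (real n + 1))"
  have vavg: "valid (avg n)" for n unfolding avg_def by (rule valid_avg[OF vcs])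
  have savg: "sinv (avg n)" for n unfolding avg_def by (rule sinv_avg[OF scs])
  obtain r c where rc: "strict_mono r \<and> valid c \<and>
     (\<forall>J u. finite J \<longrightarrow> u \<in> pats J \<longrightarrow> (\<lambda>k. avg (r k) J u) \<longlonglongrightarrow> c J u)"
    using compact_fam[of avg, OF vavg] by (elim exE) (rule that)
  have r: "strict_mono r" and vc: "valid c" using rc by simp_all
  have lim: "\<And>J u. finite J \<Longrightarrow> u \<in> pats J \<Longrightarrow> (\<lambda>k. avg (r k) J u) \<longlonglongrightarrow> c J u"
    using rc by simp
  have sc: "sinv c" by (rule sinv_lim[OF savg lim])
  obtain \<nu> where pm\<nu>: "pm \<nu>" and \<nu>c: "\<And>J u. finite J \<Longrightarrow> u \<in> pats J \<Longrightarrow> measure \<nu> (cyl J u) = c J u"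
    using build[OF vc] by blast
  have "sinv (mfam \<nu>)" by (rule sinv_transfer[OF sc]) (simp add: mfam_def \<nu>c)
  then have \<nu>M: "\<nu> \<in> Minv" by (rule Minv_intro[OF pm\<nu>])
  have "(\<integral>x. PCA_kernel N g x U w \<partial>\<nu>) = measure \<nu> (cyl U w)" if U: "finite U" for U w
  proof -
    let ?H = "nbh N U" and ?w = "restrict w U"
    have H: "finite ?H" by (rule finite_nbh[OF finN U])
    have w': "?w \<in> pats U" by simp
    define K where "K = (\<lambda>v. PCA_kernel N g v U w)"
    have lhs: "(\<integral>x. PCA_kernel N g x U w \<partial>\<nu>) = (\<Sum>v\<in>pats ?H. c ?H v * K v)"
      using kernel_fam_sum[OF pm\<nu> U, of w] unfolding Fam_def K_def by (simp add: \<nu>c[OF H])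
    have rhs: "measure \<nu> (cyl U w) = c U ?w"
      using \<nu>c[OF U w'] by (simp add: cyl_restrict)
    have step: "(\<Sum>v\<in>pats ?H. cs k ?H v * K v) = cs (Suc k) U ?w" for k
    proof -
      have "cs (Suc k) U ?w = Fam N g (\<mu>s k) U ?w" by (rule csS[OF U w'])
      also have "\<dots> = (\<Sum>v\<in>pats ?H. measure (\<mu>s k) (cyl ?H v) * PCA_kernel N g v U ?w)"
        by (rule kernel_fam_sum[OF pmk U])
      finally show ?thesis by (simp add: cs_def mfam_def K_def kernel_restrict_w)
    qed
    define D where "D = (\<lambda>n. (cs (Suc n) U ?w - cs 0 U ?w) / (real n + 1))"
    have avg_eq: "(\<Sum>v\<in>pats ?H. avg n ?H v * K v) = avg n U ?w + D n" for n
    proof -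
      have "(\<Sum>v\<in>pats ?H. avg n ?H v * K v) = (\<Sum>v\<in>pats ?H. (\<Sum>k\<le>n. cs k ?H v * K v) / (real n + 1))"
        unfolding avg_def by (intro sum.cong refl) (simp add: sum_distrib_right)
      also have "\<dots> = (\<Sum>v\<in>pats ?H. \<Sum>k\<le>n. cs k ?H v * K v) / (real n + 1)"
        by (rule sum_divide_distrib[symmetric])
      also have "(\<Sum>v\<in>pats ?H. \<Sum>k\<le>n. cs k ?H v * K v) = (\<Sum>k\<le>n. \<Sum>v\<in>pats ?H. cs k ?H v * K v)"
        by (rule sum.swap)
      also have "\<dots> = (\<Sum>k\<le>n. cs (Suc k) U ?w)" by (intro sum.cong refl step)
      also have "(\<Sum>k\<le>n. cs (Suc k) U ?w) = (\<Sum>k\<le>n. cs k U ?w) + (cs (Suc n) U ?w - cs 0 U ?w)"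
        using sum.atMost_Suc_shift[of "\<lambda>k. cs k U ?w" n] sum.atMost_Suc[of "\<lambda>k. cs k U ?w" n] by simp
      finally show ?thesis unfolding avg_def D_def by (simp add: add_divide_distrib)
    qed
    have D0: "D \<longlonglongrightarrow> 0"
    proof (rule Lim_null_comparison[OF always_eventually LIMSEQ_inverse_real_of_nat])
      show "\<forall>n. norm (D n) \<le> inverse (real (Suc n))"
      proof
        fix n
        have "0 \<le> cs (Suc n) U ?w" "cs (Suc n) U ?w \<le> 1" "0 \<le> cs 0 U ?w" "cs 0 U ?w \<le> 1"
          using valid_nonneg[OF vcs U w'] valid_le1[OF vcs U w'] by auto
        then have "\<bar>cs (Suc n) U ?w - cs 0 U ?w\<bar> \<le> 1" by linarith
        then have "\<bar>cs (Suc n) U ?w - cs 0 U ?w\<bar> / (real n + 1) \<le> 1 / (real n + 1)"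
          by (intro divide_right_mono) auto
        moreover have "norm (D n) = \<bar>cs (Suc n) U ?w - cs 0 U ?w\<bar> / (real n + 1)"
          unfolding D_def by (simp add: abs_divide)
        moreover have "1 / (real n + 1) = inverse (real (Suc n))" by (simp add: inverse_eq_divide)
        ultimately show "norm (D n) \<le> inverse (real (Suc n))" by simp
      qed
    qed
    have l1: "(\<lambda>k. \<Sum>v\<in>pats ?H. avg (r k) ?H v * K v) \<longlonglongrightarrow> (\<Sum>v\<in>pats ?H. c ?H v * K v)"
      using H by (intro tendsto_sum tendsto_mult tendsto_const lim) auto
    have l2: "(\<lambda>k. avg (r k) U ?w + D (r k)) \<longlonglongrightarrow> c U ?w + 0"
      using LIMSEQ_subseq_LIMSEQ[OF D0 r] by (intro tendsto_add lim[OF U w']) (simp add: o_def)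
    have "(\<Sum>v\<in>pats ?H. c ?H v * K v) = c U ?w"
      using l1 l2 unfolding avg_eq by (auto intro: LIMSEQ_unique)
    then show ?thesis using lhs rhs by simp
  qed
  then show ?thesis using \<nu>M by blast
qed

end

lemma Meps_nonempty:
  assumes p: "is_perturbation N f fe" and e: "e > 0"
  shows "Meps N fe e \<noteq> {}"
proof -
  interpret stoch N "fe e"
    using p e unfolding is_perturbation_def by unfold_locales auto
  obtain \<nu> where "\<nu> \<in> Minv" "\<forall>U w. finite U \<longrightarrow> (\<integral>x. PCA_kernel N (fe e) x U w \<partial>\<nu>) = measure \<nu> (cyl U w)"
    using fixed_point_ex by blast
  then show ?thesis unfolding Meps_def by blast
qed

definition dterm :: "(int \<Rightarrow> 'a::finite) measure \<Rightarrow> (int \<Rightarrow> 'a) measure \<Rightarrow> nat \<Rightarrow> real" where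
  "dterm \<mu> \<nu> n = (1/2)^n * (1/2) *
      (\<Sum>u\<in>pats (win n). \<bar>measure \<mu> (cyl (win n) u) - measure \<nu> (cyl (win n) u)\<bar>)"

lemma dM_eq: "dM \<mu> \<nu> = (\<Sum>n. dterm \<mu> \<nu> n)"
  unfolding dM_def dterm_def win_def ..

lemma dterm_nonneg: "dterm \<mu> \<nu> n \<ge> 0"
  unfolding dterm_def by (intro mult_nonneg_nonneg sum_nonneg) auto

lemma sum_measure_win: "pm (\<mu> :: (int \<Rightarrow> 'a::finite) measure) \<Longrightarrow> (\<Sum>u\<in>pats (win n). measure \<mu> (cyl (win n) u)) = 1"
  using valid_sum1[OF valid_mfam, of \<mu> "win n"] by (simp add: mfam_def)

lemma dterm_le:
  assumes "pm \<mu>" "pm \<nu>" shows "dterm \<mu> \<nu> n \<le> (1/2)^n"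
proof -
  have "(\<Sum>u\<in>pats (win n). \<bar>measure \<mu> (cyl (win n) u) - measure \<nu> (cyl (win n) u)\<bar>)
      \<le> (\<Sum>u\<in>pats (win n). measure \<mu> (cyl (win n) u) + measure \<nu> (cyl (win n) u))"
    by (intro sum_mono) (auto simp: abs_le_iff)
  also have "\<dots> = 2" using sum_measure_win[OF assms(1)] sum_measure_win[OF assms(2)]
    by (simp add: sum.distrib)
  finally show ?thesis unfolding dterm_def by (simp add: mult_left_mono)
qed

lemma summable_half: "summable (\<lambda>n. (1/2::real)^n)"
  by (rule summable_geometric) simp

lemma summable_dterm: "pm \<mu> \<Longrightarrow> pm \<nu> \<Longrightarrow> summable (dterm \<mu> \<nu>)"
  by (rule summable_comparison_test'[OF summable_half]) (simp add: dterm_nonneg dterm_le)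

lemma dM_le2: assumes "pm \<mu>" "pm \<nu>" shows "dM \<mu> \<nu> \<le> 2"
proof -
  have "dM \<mu> \<nu> \<le> (\<Sum>n. (1/2::real)^n)"
    unfolding dM_eq by (intro suminf_le summable_dterm assms summable_half dterm_le)
  also have "\<dots> = 2" by (simp add: suminf_geometric)
  finally show ?thesis .
qed

lemma dM_sym: "dM \<mu> \<nu> = dM \<nu> \<mu>"
  unfolding dM_def by (simp add: abs_minus_commute)

lemma dM_tri:
  assumes "pm \<mu>" "pm \<nu>" "pm \<rho>"
  shows "dM \<mu> \<rho> \<le> dM \<mu> \<nu> + dM \<nu> \<rho>"
proof -
  have "dM \<mu> \<nu> + dM \<nu> \<rho> = (\<Sum>n. dterm \<mu> \<nu> n + dterm \<nu> \<rho> n)"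
    unfolding dM_eq by (intro suminf_add summable_dterm assms)
  moreover have "dM \<mu> \<rho> \<le> (\<Sum>n. dterm \<mu> \<nu> n + dterm \<nu> \<rho> n)"
    unfolding dM_eq
  proof (intro suminf_le summable_add summable_dterm assms)
    fix n
    have "(\<Sum>u\<in>pats (win n). \<bar>measure \<mu> (cyl (win n) u) - measure \<rho> (cyl (win n) u)\<bar>)
       \<le> (\<Sum>u\<in>pats (win n). \<bar>measure \<mu> (cyl (win n) u) - measure \<nu> (cyl (win n) u)\<bar> + \<bar>measure \<nu> (cyl (win n) u) - measure \<rho> (cyl (win n) u)\<bar>)"
      by (intro sum_mono) auto
    then show "dterm \<mu> \<rho> n \<le> dterm \<mu> \<nu> n + dterm \<nu> \<rho> n"
      unfolding dterm_def by (simp add: sum.distrib distrib_left[symmetric] mult_left_mono)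
  qed
  ultimately show ?thesis by simp
qed

lemma dM_tendsto:
  assumes pm: "pm \<mu>" and pms: "\<And>k. pm (\<mu>s k)"
    and lim: "\<And>n u. u \<in> pats (win n) \<Longrightarrow> (\<lambda>k. measure (\<mu>s k) (cyl (win n) u)) \<longlonglongrightarrow> measure \<mu> (cyl (win n) u)"
  shows "(\<lambda>k. dM (\<mu>s k) \<mu>) \<longlonglongrightarrow> 0"
proof -
  have t: "(\<lambda>k. dterm (\<mu>s k) \<mu> n) \<longlonglongrightarrow> 0" for n
  proof -
    have "(\<lambda>k. dterm (\<mu>s k) \<mu> n) \<longlonglongrightarrow> (1/2)^n * (1/2) *
      (\<Sum>u\<in>pats (win n). \<bar>measure \<mu> (cyl (win n) u) - measure \<mu> (cyl (win n) u)\<bar>)"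
      unfolding dterm_def by (intro tendsto_mult tendsto_const tendsto_sum tendsto_rabs tendsto_diff lim) auto
    then show ?thesis by simp
  qed
  have "((\<lambda>k. suminf (\<lambda>n. dterm (\<mu>s k) \<mu> n)) \<longlongrightarrow> suminf (\<lambda>n. 0::real)) sequentially"
  proof (rule tannerys_theorem[where M="\<lambda>n. (1/2)^n", THEN conjunct2, THEN conjunct2])
    show "\<And>n. (\<lambda>k. dterm (\<mu>s k) \<mu> n) \<longlonglongrightarrow> 0" by (rule t)
    show "\<forall>\<^sub>F (n, k) in sequentially \<times>\<^sub>F sequentially. norm (dterm (\<mu>s k) \<mu> n) \<le> (1/2)^n"
      by (intro always_eventually) (auto simp: dterm_nonneg dterm_le[OF pms pm])
  qed (auto simp: summable_half)
  then show ?thesis unfolding dM_eq by simp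
qed

lemma Mlim_nonempty:
  assumes p: "is_perturbation N f fe"
  shows "Mlim N fe \<noteq> {}"
proof -
  define en where "en = (\<lambda>n::nat. inverse (real (Suc n)))"
  have en_pos: "en n > 0" for n by (simp add: en_def)
  define \<mu>n where "\<mu>n = (\<lambda>n. SOME \<mu>. \<mu> \<in> Meps N fe (en n))"
  have \<mu>nE: "\<mu>n n \<in> Meps N fe (en n)" for n
    unfolding \<mu>n_def using Meps_nonempty[OF p en_pos[of n]] by (simp add: some_in_eq)
  have \<mu>nM: "\<mu>n n \<in> Minv" for n using \<mu>nE[of n] by (simp add: Meps_def)
  define cs where "cs = (\<lambda>n. mfam (\<mu>n n))"
  have vcs: "valid (cs n)" for n unfolding cs_def by (rule valid_mfam[OF Minv_imp(1)[OF \<mu>nM]])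
  have scs: "sinv (cs n)" for n unfolding cs_def by (rule Minv_imp(2)[OF \<mu>nM])
  obtain r c where rc: "strict_mono r \<and> valid c \<and>
     (\<forall>J u. finite J \<longrightarrow> u \<in> pats J \<longrightarrow> (\<lambda>k. cs (r k) J u) \<longlonglongrightarrow> c J u)"
    using compact_fam[of cs, OF vcs] by (elim exE) (rule that)
  have r: "strict_mono r" and vc: "valid c" using rc by simp_all
  have lim: "\<And>J u. finite J \<Longrightarrow> u \<in> pats J \<Longrightarrow> (\<lambda>k. cs (r k) J u) \<longlonglongrightarrow> c J u"
    using rc by simp
  have sc: "sinv c" by (rule sinv_lim[of "\<lambda>k. cs (r k)", OF scs lim])
  obtain \<mu> where pm\<mu>: "pm \<mu>" and \<mu>c: "\<And>J u. finite J \<Longrightarrow> u \<in> pats J \<Longrightarrow> measure \<mu> (cyl J u) = c J u"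
    using build[OF vc] by blast
  have "sinv (mfam \<mu>)" by (rule sinv_transfer[OF sc]) (simp add: mfam_def \<mu>c)
  then have \<mu>M: "\<mu> \<in> Minv" by (rule Minv_intro[OF pm\<mu>])
  have d: "(\<lambda>k. dM (\<mu>n (r k)) \<mu>) \<longlonglongrightarrow> 0"
  proof (rule dM_tendsto[OF pm\<mu>])
    show "pm (\<mu>n (r k))" for k by (rule Minv_imp(1)[OF \<mu>nM])
    fix n and u :: "int \<Rightarrow> 'a" assume u: "u \<in> pats (win n)"
    show "(\<lambda>k. measure (\<mu>n (r k)) (cyl (win n) u)) \<longlonglongrightarrow> measure \<mu> (cyl (win n) u)"
      using lim[OF finite_win u] \<mu>c[OF finite_win u] by (simp add: cs_def mfam_def)
  qed
  have e0: "(\<lambda>k. en (r k)) \<longlonglongrightarrow> 0"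
    using LIMSEQ_subseq_LIMSEQ[OF LIMSEQ_inverse_real_of_nat r] by (simp add: en_def o_def)
  have "\<mu> \<in> Mlim N fe"
    unfolding Mlim_def
  proof (intro CollectI conjI exI[of _ "\<lambda>k. en (r k)"] exI[of _ "\<lambda>k. \<mu>n (r k)"])
    show "\<mu> \<in> Minv" by (rule \<mu>M)
    show "\<forall>n. 0 < en (r n)" using en_pos by simp
    show "(\<lambda>k. en (r k)) \<longlonglongrightarrow> 0" by (rule e0)
    show "\<forall>n. \<mu>n (r n) \<in> Meps N fe (en (r n))" using \<mu>nE by simp
    show "(\<lambda>n. dM (\<mu>n (r n)) \<mu>) \<longlonglongrightarrow> 0" by (rule d)
  qed
  then show ?thesis by blast
qed

lemma diam_far:
  assumes K: "K \<noteq> {}" "K \<subseteq> Minv" and \<rho>: "\<rho> \<in> Minv" and dl: "diamM K \<ge> \<delta>" and \<delta>: "\<delta> > 0"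
  shows "\<exists>\<pi>\<in>K. dM \<pi> \<rho> > \<delta> / 3"
proof -
  let ?D = "{dM \<mu> \<nu> | \<mu> \<nu>. \<mu> \<in> K \<and> \<nu> \<in> K}"
  have ne: "?D \<noteq> {}" using K by blast
  have bdd: "bdd_above ?D"
    using K(2) by (intro bdd_aboveI[of _ 2]) (auto intro!: dM_le2 Minv_imp(1))
  have "2 * \<delta> / 3 < Sup ?D" using dl \<delta> unfolding diamM_def by simp
  then obtain d where "d \<in> ?D" "2 * \<delta> / 3 < d" using less_cSup_iff[OF ne bdd] by blast
  then obtain \<mu> \<nu> where \<mu>\<nu>: "\<mu> \<in> K" "\<nu> \<in> K" "2 * \<delta> / 3 < dM \<mu> \<nu>" by blast
  have pms: "pm \<mu>" "pm \<nu>" "pm \<rho>" using \<mu>\<nu> K(2) \<rho> by (auto intro: Minv_imp(1))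
  have "dM \<mu> \<nu> \<le> dM \<mu> \<rho> + dM \<rho> \<nu>" by (rule dM_tri[OF pms(1) pms(3) pms(2)])
  then have "dM \<mu> \<nu> \<le> dM \<mu> \<rho> + dM \<nu> \<rho>" by (simp add: dM_sym[of \<rho> \<nu>])
  then have "dM \<mu> \<rho> > \<delta> / 3 \<or> dM \<nu> \<rho> > \<delta> / 3" using \<mu>\<nu>(3) by linarith
  then show ?thesis using \<mu>\<nu> by blast
qed

theorem mainTheorem9:
  fixes N :: "int set" and f :: "(int \<Rightarrow> 'a::finite) \<Rightarrow> 'a"
    and fe :: "real \<Rightarrow> (int \<Rightarrow> 'a) \<Rightarrow> 'a \<Rightarrow> real"
  assumes "is_perturbation N f fe"
    and "uniformly_approached N fe"
  shows "\<forall>\<delta>>0. \<forall>e0>0. \<exists>e. 0 < e \<and> e < e0 \<and> diamM (Meps N fe e) < \<delta>"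
proof (intro allI impI)
  fix \<delta> e0 :: real assume \<delta>: "\<delta> > 0" and e0: "e0 > 0"
  show "\<exists>e. 0 < e \<and> e < e0 \<and> diamM (Meps N fe e) < \<delta>"
  proof (rule ccontr)
    assume H: "\<not> (\<exists>e. 0 < e \<and> e < e0 \<and> diamM (Meps N fe e) < \<delta>)"
    obtain \<rho> where \<rho>: "\<rho> \<in> Mlim N fe" using Mlim_nonempty[OF assms(1)] by blast
    have \<rho>M: "\<rho> \<in> Minv" using \<rho> by (simp add: Mlim_def)
    have KM: "Meps N fe e \<subseteq> Minv" for e by (auto simp: Meps_def)
    have far: "\<exists>\<pi>. \<pi> \<in> Meps N fe e \<and> dM \<pi> \<rho> > \<delta> / 3" if ep: "0 < e" and el: "e < e0" for e
    proof -
      have "diamM (Meps N fe e) \<ge> \<delta>" using H ep el by auto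
      then obtain \<pi>0 where "\<pi>0 \<in> Meps N fe e" "dM \<pi>0 \<rho> > \<delta> / 3"
        using diam_far[OF Meps_nonempty[OF assms(1) ep] KM \<rho>M _ \<delta>] by blast
      then show ?thesis by blast
    qed
    define \<pi> where "\<pi> = (\<lambda>e. if 0 < e \<and> e < e0 then (SOME \<pi>. \<pi> \<in> Meps N fe e \<and> dM \<pi> \<rho> > \<delta> / 3)
                          else (SOME \<pi>. \<pi> \<in> Meps N fe e))"
    have \<pi>1: "\<pi> e \<in> Meps N fe e \<and> dM (\<pi> e) \<rho> > \<delta> / 3" if "0 < e" "e < e0" for e
      unfolding \<pi>_def using that someI_ex[OF far[OF that]] by simp
    have \<pi>2: "\<pi> e \<in> Meps N fe e" if "e > 0" for e
    proof (cases "e < e0")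
      case True then show ?thesis using \<pi>1 that by blast
    next
      case False
      then show ?thesis unfolding \<pi>_def using Meps_nonempty[OF assms(1) that] by (simp add: some_in_eq)
    qed
    have "acc_points \<pi> = Mlim N fe"
      using assms(2) \<pi>2 unfolding uniformly_approached_def by blast
    then have "\<rho> \<in> acc_points \<pi>" using \<rho> by simp
    then have fr: "\<exists>\<^sub>F e in at_right 0. dM (\<pi> e) \<rho> < \<delta> / 3"
    proof -
      have "\<forall>r>0. \<exists>\<^sub>F e in at_right 0. dM (\<pi> e) \<rho> < r"
        using \<open>\<rho> \<in> acc_points \<pi>\<close> unfolding acc_points_def by blast
      moreover have "\<delta> / 3 > 0" using \<delta> by simp
      ultimately show ?thesis by blast
    qed
    have ev: "\<forall>\<^sub>F e in at_right 0. \<not> dM (\<pi> e) \<rho> < \<delta> / 3"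
      unfolding eventually_at_right_field
    proof (intro exI[of _ e0] conjI allI impI)
      show "e0 > 0" by (rule e0)
      fix y :: real assume "0 < y" "y < e0"
      then have "dM (\<pi> y) \<rho> > \<delta> / 3" using \<pi>1 by blast
      then show "\<not> dM (\<pi> y) \<rho> < \<delta> / 3" by simp
    qed
    show False using fr ev unfolding frequently_def by simp
  qed
qed

end
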